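(* Let $\alpha: I\to M$ be a unit-speed curve on an oriented surface $M\subset E^3$ with Darboux frame $\{T,V,U\}$ and curvatures $k_g,k_n,\tau_g$, and assume $(k_g(s),\tau_g(s))\neq(0,0)$ for all $s$. Let $\gamma(s)=\alpha(s)+y_1(s)T(s)+y_2(s)V(s)+y_3(s)U(s)$, with $y_i$ smooth, be an associated curve whose tangent $\gamma'(s)$ is linearly dependent with $V(s)$, i.e. $\gamma'(s)=R(s)V(s)$ with $R(s)\neq0$ for all $s$. Then the following are equivalent: (i) $\gamma$ is a general helix; (ii) $\alpha$ is a relatively normal-slant helix; (iii) $\alpha$ is a $D_r$-Darboux slant helix.
   Context: $M$ is an oriented surface in Euclidean 3-space $E^3$ and $\alpha:I\to M$ is a unit-speed curve with arc-length parameter $s$. Its Darboux frame $\{T,V,U\}$ consists of the unit tangent $T=\alpha'$, the unit surface normal $U$ of $M$ along $\alpha$, and $V=U\times T$; it satisfies $T'=k_gV+k_nU$, $V'=-k_gT+\tau_gU$, $U'=-k_nT-\tau_gV$, where $k_g,k_n,\tau_g$ are the geodesic curvature, normal curvature and geodesic torsion. A regular curve is a general helix if its unit tangent makes a constant angle with a fixed direction. $\alpha$ is a relatively normal-slant helix if $\langle V,d\rangle$ is constant for some fixed unit vector $d$. The rectifying Darboux vector field is $D_r=\tau_gT+k_gU$; $\alpha$ is a $D_r$-Darboux slant helix if $D_r/\|D_r\|$ makes a constant angle with a fixed unit direction. *)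

theory Defs
  imports "HOL-Analysis.Analysis" "HOL-Analysis.Cross3"
begin

definition iter_deriv :: "nat \<Rightarrow> (real \<Rightarrow> 'a::real_normed_vector) \<Rightarrow> real \<Rightarrow> 'a" where
  "iter_deriv n f = ((\<lambda>g t. vector_derivative g (at t)) ^^ n) f"

definition smooth_on :: "real set \<Rightarrow> (real \<Rightarrow> 'a::real_normed_vector) \<Rightarrow> bool" where
  "smooth_on S f \<longleftrightarrow> (\<forall>n. \<forall>x\<in>S. iter_deriv n f differentiable (at x))"

text \<open>Darboux frame {T,V,U} of a unit-speed curve alpha with curvatures kg, kn, tg on I:
  T = alpha', U unit (surface normal along alpha) orthogonal to T, V = U x T, and the Darboux equations.\<close>
definition darboux_frame ::
  "real set \<Rightarrow> (real \<Rightarrow> real^3) \<Rightarrow> (real \<Rightarrow> real^3) \<Rightarrow> (real \<Rightarrow> real^3) \<Rightarrow> (real \<Rightarrow> real^3)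
   \<Rightarrow> (real \<Rightarrow> real) \<Rightarrow> (real \<Rightarrow> real) \<Rightarrow> (real \<Rightarrow> real) \<Rightarrow> bool" where
  "darboux_frame I \<alpha> T V U kg kn tg \<longleftrightarrow>
     (\<forall>s\<in>I. (\<alpha> has_vector_derivative T s) (at s)
        \<and> norm (T s) = 1 \<and> norm (U s) = 1 \<and> T s \<bullet> U s = 0
        \<and> V s = cross3 (U s) (T s)
        \<and> (T has_vector_derivative (kg s *\<^sub>R V s + kn s *\<^sub>R U s)) (at s)
        \<and> (V has_vector_derivative (- kg s *\<^sub>R T s + tg s *\<^sub>R U s)) (at s)
        \<and> (U has_vector_derivative (- kn s *\<^sub>R T s - tg s *\<^sub>R V s)) (at s))"

definition general_helix :: "real set \<Rightarrow> (real \<Rightarrow> real^3) \<Rightarrow> bool" where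
  "general_helix I \<gamma> \<longleftrightarrow>
     (\<forall>s\<in>I. \<gamma> differentiable (at s) \<and> vector_derivative \<gamma> (at s) \<noteq> 0) \<and>
     (\<exists>d c. norm d = 1 \<and>
        (\<forall>s\<in>I. (vector_derivative \<gamma> (at s) /\<^sub>R norm (vector_derivative \<gamma> (at s))) \<bullet> d = c))"

definition rel_normal_slant_helix :: "real set \<Rightarrow> (real \<Rightarrow> real^3) \<Rightarrow> bool" where
  "rel_normal_slant_helix I V \<longleftrightarrow> (\<exists>d c. norm d = 1 \<and> (\<forall>s\<in>I. V s \<bullet> d = c))"

definition rect_darboux :: "(real \<Rightarrow> real^3) \<Rightarrow> (real \<Rightarrow> real^3) \<Rightarrow> (real \<Rightarrow> real) \<Rightarrow> (real \<Rightarrow> real) \<Rightarrow> real \<Rightarrow> real^3" where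
  "rect_darboux T U kg tg s = tg s *\<^sub>R T s + kg s *\<^sub>R U s"

definition Dr_slant_helix :: "real set \<Rightarrow> (real \<Rightarrow> real^3) \<Rightarrow> (real \<Rightarrow> real^3) \<Rightarrow> (real \<Rightarrow> real) \<Rightarrow> (real \<Rightarrow> real) \<Rightarrow> bool" where
  "Dr_slant_helix I T U kg tg \<longleftrightarrow>
     (\<exists>d c. norm d = 1 \<and>
        (\<forall>s\<in>I. (rect_darboux T U kg tg s /\<^sub>R norm (rect_darboux T U kg tg s)) \<bullet> d = c))"

end

theory Submission
  imports Defs
begin
lemma iter0: "iter_deriv 0 f = f" by (simp add: iter_deriv_def)
lemma iter1: "iter_deriv (Suc 0) f = (\<lambda>t. vector_derivative f (at t))" by (simp add: iter_deriv_def)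

lemma smooth_differentiable: "smooth_on S f \<Longrightarrow> x\<in>S \<Longrightarrow> f differentiable (at x)"
  unfolding smooth_on_def by (drule spec[where x=0]) (simp add: iter0)

lemma smooth_deriv_differentiable: "smooth_on S f \<Longrightarrow> x\<in>S \<Longrightarrow> (\<lambda>t. vector_derivative f (at t)) differentiable (at x)"
  unfolding smooth_on_def by (drule spec[where x=1]) (simp add: iter1)

lemma diff_cont_on: "(\<And>x. x\<in>S \<Longrightarrow> f differentiable (at x)) \<Longrightarrow> continuous_on S f"
  by (intro continuous_at_imp_continuous_on ballI differentiable_imp_continuous_within) auto

lemma smooth_cont: "smooth_on S f \<Longrightarrow> continuous_on S f"
  by (intro diff_cont_on smooth_differentiable)

lemma smooth_deriv_cont: "smooth_on S f \<Longrightarrow> continuous_on S (\<lambda>t. vector_derivative f (at t))"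
  by (intro diff_cont_on smooth_deriv_differentiable)

lemma smooth_vec_deriv: "smooth_on S f \<Longrightarrow> x\<in>S \<Longrightarrow> (f has_vector_derivative vector_derivative f (at x)) (at x)"
  by (simp add: smooth_differentiable vector_derivative_works[symmetric])

lemma smooth_real_deriv: "smooth_on S (f::real\<Rightarrow>real) \<Longrightarrow> x\<in>S \<Longrightarrow> (f has_real_derivative vector_derivative f (at x)) (at x)"
  by (simp add: smooth_vec_deriv has_real_derivative_iff_has_vector_derivative)

lemma vderiv_cont: "(\<forall>s\<in>S. (f has_vector_derivative f' s) (at s)) \<Longrightarrow> continuous_on S f"
  by (intro diff_cont_on) (auto intro: differentiableI_vector)

lemma ivt0:
  fixes f :: "real \<Rightarrow> real"
  assumes "is_interval I" "continuous_on I f" "x\<in>I" "y\<in>I" "f x \<le> 0" "0 \<le> f y"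
  shows "\<exists>z\<in>I. f z = 0"
proof -
  have "connected (f ` I)" by (rule connected_continuous_image) (use assms is_interval_connected in auto)
  then have "is_interval (f ` I)" by (simp add: is_interval_connected_1)
  then have "0 \<in> f ` I" using assms by (meson image_eqI mem_is_interval_1_I)
  then show ?thesis by auto
qed

lemma sign_const:
  fixes f :: "real \<Rightarrow> real"
  assumes "is_interval I" "continuous_on I f" "\<forall>s\<in>I. f s \<noteq> 0"
  shows "(\<forall>s\<in>I. f s > 0) \<or> (\<forall>s\<in>I. f s < 0)"
proof (rule ccontr)
  assume "\<not> ?thesis"
  then obtain x y where xy: "x\<in>I" "y\<in>I" "\<not> f x > 0" "\<not> f y < 0" by blast
  then have "f x \<le> 0" "0 \<le> f y" by auto
  then obtain z where "z\<in>I" "f z = 0" using ivt0[OF assms(1,2) xy(1,2)] by blast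
  then show False using assms(3) by blast
qed

lemma two_val_const:
  fixes f :: "real \<Rightarrow> real"
  assumes "is_interval I" "continuous_on I f" "\<forall>s\<in>I. f s = k \<or> f s = -k" "x\<in>I" "y\<in>I"
  shows "f x = f y"
proof (rule ccontr)
  assume ne: "f x \<noteq> f y"
  have k0: "k \<noteq> 0"
  proof
    assume "k = 0"
    then have "f x = 0" "f y = 0" using assms(3-5) by auto
    then show False using ne by simp
  qed
  have "\<forall>s\<in>I. f s \<noteq> 0" using assms(3) k0 by force
  from sign_const[OF assms(1,2) this] have "(f x > 0 \<and> f y > 0) \<or> (f x < 0 \<and> f y < 0)"
    using assms(4,5) by blast
  moreover have "f x = k \<or> f x = -k" "f y = k \<or> f y = -k" using assms(3-5) by auto
  ultimately show False using ne by auto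
qed

lemma gram3:
  fixes T U d :: "real^3"
  shows "(cross3 U T \<bullet> d)\<^sup>2 = (U\<bullet>U)*(T\<bullet>T)*(d\<bullet>d) + 2*(U\<bullet>T)*(T\<bullet>d)*(d\<bullet>U) - (U\<bullet>U)*(T\<bullet>d)\<^sup>2 - (T\<bullet>T)*(U\<bullet>d)\<^sup>2 - (d\<bullet>d)*(U\<bullet>T)\<^sup>2"
  unfolding cross3_def inner_vec_def sum_3 vector_def power2_eq_square
  by (simp add: vector_def) algebra

lemma frame_alg:
  fixes T U d :: "real^3"
  assumes "norm T = 1" "norm U = 1" "T \<bullet> U = 0"
  shows "cross3 U T \<bullet> T = 0" "cross3 U T \<bullet> U = 0" "norm (cross3 U T) = 1"
    "d \<bullet> d = (T \<bullet> d)\<^sup>2 + (cross3 U T \<bullet> d)\<^sup>2 + (U \<bullet> d)\<^sup>2"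
proof -
  show "cross3 U T \<bullet> T = 0" "cross3 U T \<bullet> U = 0" using dot_cross_self by auto
  have "(norm (cross3 U T))\<^sup>2 = 1" using norm_cross_dot[of U T] assms by (simp add: inner_commute)
  then show "norm (cross3 U T) = 1" using norm_ge_zero[of "cross3 U T"] by (simp add: power2_eq_1_iff)
  have t: "T \<bullet> T = 1" "U \<bullet> U = 1" using assms by (simp_all add: dot_square_norm)
  show "d \<bullet> d = (T \<bullet> d)\<^sup>2 + (cross3 U T \<bullet> d)\<^sup>2 + (U \<bullet> d)\<^sup>2"
    using gram3[of U T d] t assms(3) by (simp add: inner_commute)
qed

lemma vderiv_const_open:
  assumes "open S" "s\<in>S" "\<forall>t\<in>S. f t = c" "(f has_vector_derivative D) (at s)"
  shows "D = 0"
proof -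
  have "((\<lambda>t. c) has_vector_derivative 0) (at s)" by simp
  then have "(f has_vector_derivative 0) (at s)"
    by (rule has_vector_derivative_transform_within_open[OF _ assms(1,2)]) (use assms(3) in auto)
  then show ?thesis using assms(4) vector_derivative_unique_at by metis
qed

lemma rderiv_const_open:
  fixes f :: "real \<Rightarrow> real"
  assumes "open S" "s\<in>S" "\<forall>t\<in>S. f t = c" "(f has_real_derivative D) (at s)"
  shows "D = 0"
  using vderiv_const_open[OF assms(1-3)] assms(4) has_real_derivative_iff_has_vector_derivative by metis

lemma inner_deriv:
  fixes f :: "real \<Rightarrow> real^3"
  assumes "(f has_vector_derivative f') (at s)"
  shows "((\<lambda>s. f s \<bullet> d) has_real_derivative (f' \<bullet> d)) (at s)"
  using bounded_linear.has_vector_derivative[OF bounded_linear_inner_left assms]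
  by (simp add: has_real_derivative_iff_has_vector_derivative)

lemma quot_alg:
  fixes r x y x' y' :: real
  assumes "r > 0" "r*r = x*x + y*y"
  shows "(x'*r - x*((x*x' + y*y')/r))/(r*r) = (y/r)*((y*x' - x*y')/(r*r))"
proof -
  have p: "x'*(r*r) - x*(x*x' + y*y') = y*(y*x' - x*y')"
    unfolding assms(2) by (simp add: algebra_simps)
  have "x'*r = x'*(r*r)/r" using assms(1) by simp
  then have "x'*r - x*((x*x' + y*y')/r) = (x'*(r*r) - x*(x*x' + y*y'))/r"
    by (simp add: diff_divide_distrib)
  also have "\<dots> = y*(y*x' - x*y')/r" using p by simp
  finally show ?thesis by simp
qed

lemma inv_half: "inverse (z::real) / 2 * (2 * y) = y / z" by (simp add: field_simps)

lemma neg_lemma: fixes t r x y z :: real shows "t / r * ((x - y) / z) = - (t / r * ((y - x) / z))"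
proof -
  have "(x - y) / z = - ((y - x) / z)" by (simp add: minus_divide_left)
  then show ?thesis by simp
qed
theorem theorem3p12:
  fixes I :: "real set"
    and \<alpha> T V U \<gamma> :: "real \<Rightarrow> real^3"
    and kg kn tg y1 y2 y3 R :: "real \<Rightarrow> real"
  assumes I: "open I" "is_interval I" "I \<noteq> {}"
    and smooth: "smooth_on I \<alpha>" "smooth_on I U"
      "smooth_on I kg" "smooth_on I kn" "smooth_on I tg"
    and frame: "darboux_frame I \<alpha> T V U kg kn tg"
    and nondeg: "\<forall>s\<in>I. (kg s, tg s) \<noteq> (0, 0)"
    and ysmooth: "smooth_on I y1" "smooth_on I y2" "smooth_on I y3"
    and gamma: "\<forall>s\<in>I. \<gamma> s = \<alpha> s + y1 s *\<^sub>R T s + y2 s *\<^sub>R V s + y3 s *\<^sub>R U s"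
    and tangent: "\<forall>s\<in>I. (\<gamma> has_vector_derivative R s *\<^sub>R V s) (at s) \<and> R s \<noteq> 0"
  shows "(general_helix I \<gamma> \<longleftrightarrow> rel_normal_slant_helix I V)
       \<and> (rel_normal_slant_helix I V \<longleftrightarrow> Dr_slant_helix I T U kg tg)"
proof -
  note fr = frame[unfolded darboux_frame_def, rule_format]
  have dA: "\<And>s. s\<in>I \<Longrightarrow> (\<alpha> has_vector_derivative T s) (at s)" using fr by blast
  have nT: "\<And>s. s\<in>I \<Longrightarrow> norm (T s) = 1" using fr by blast
  have nU: "\<And>s. s\<in>I \<Longrightarrow> norm (U s) = 1" using fr by blast
  have TU: "\<And>s. s\<in>I \<Longrightarrow> T s \<bullet> U s = 0" using fr by blast
  have Vc: "\<And>s. s\<in>I \<Longrightarrow> V s = cross3 (U s) (T s)" using fr by blast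
  have dT: "\<And>s. s\<in>I \<Longrightarrow> (T has_vector_derivative (kg s *\<^sub>R V s + kn s *\<^sub>R U s)) (at s)" using fr by blast
  have dV: "\<And>s. s\<in>I \<Longrightarrow> (V has_vector_derivative (- kg s *\<^sub>R T s + tg s *\<^sub>R U s)) (at s)" using fr by blast
  have dU: "\<And>s. s\<in>I \<Longrightarrow> (U has_vector_derivative (- kn s *\<^sub>R T s - tg s *\<^sub>R V s)) (at s)" using fr by blast
  have VT: "V s \<bullet> T s = 0" "T s \<bullet> V s = 0" if "s\<in>I" for s
    using frame_alg(1)[OF nT[OF that] nU[OF that] TU[OF that]] Vc[OF that] by (simp_all add: inner_commute)
  have VU: "V s \<bullet> U s = 0" "U s \<bullet> V s = 0" if "s\<in>I" for s
    using frame_alg(2)[OF nT[OF that] nU[OF that] TU[OF that]] Vc[OF that] by (simp_all add: inner_commute)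
  have UT: "U s \<bullet> T s = 0" if "s\<in>I" for s using TU[OF that] by (simp add: inner_commute)
  have nV: "norm (V s) = 1" if "s\<in>I" for s
    using frame_alg(3)[OF nT[OF that] nU[OF that] TU[OF that]] Vc[OF that] by simp
  have dec: "d \<bullet> d = (T s \<bullet> d)\<^sup>2 + (V s \<bullet> d)\<^sup>2 + (U s \<bullet> d)\<^sup>2" if "s\<in>I" for s d
    using frame_alg(4)[OF nT[OF that] nU[OF that] TU[OF that]] Vc[OF that] by simp
  have TT: "T s \<bullet> T s = 1" if "s\<in>I" for s using nT[OF that] norm_eq_1 by blast
  have UU: "U s \<bullet> U s = 1" if "s\<in>I" for s using nU[OF that] norm_eq_1 by blast
  have VV: "V s \<bullet> V s = 1" if "s\<in>I" for s using nV[OF that] norm_eq_1 by blast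
  have contT: "continuous_on I T" by (rule vderiv_cont[where f'="\<lambda>s. kg s *\<^sub>R V s + kn s *\<^sub>R U s"]) (use dT in blast)
  have contV: "continuous_on I V" by (rule vderiv_cont[where f'="\<lambda>s. - kg s *\<^sub>R T s + tg s *\<^sub>R U s"]) (use dV in blast)
  have contU: "continuous_on I U" by (rule vderiv_cont[where f'="\<lambda>s. - kn s *\<^sub>R T s - tg s *\<^sub>R V s"]) (use dU in blast)
  have Rne: "\<And>s. s\<in>I \<Longrightarrow> R s \<noteq> 0" using tangent by blast
  have dG: "\<And>s. s\<in>I \<Longrightarrow> (\<gamma> has_vector_derivative R s *\<^sub>R V s) (at s)" using tangent by blast
  define y1' where "y1' = (\<lambda>s. vector_derivative y1 (at s))"
  define y2' where "y2' = (\<lambda>s. vector_derivative y2 (at s))"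
  define y3' where "y3' = (\<lambda>s. vector_derivative y3 (at s))"
  have dy1: "\<And>s. s\<in>I \<Longrightarrow> (y1 has_real_derivative y1' s) (at s)" using smooth_real_deriv[OF ysmooth(1)] y1'_def by simp
  have dy2: "\<And>s. s\<in>I \<Longrightarrow> (y2 has_real_derivative y2' s) (at s)" using smooth_real_deriv[OF ysmooth(2)] y2'_def by simp
  have dy3: "\<And>s. s\<in>I \<Longrightarrow> (y3 has_real_derivative y3' s) (at s)" using smooth_real_deriv[OF ysmooth(3)] y3'_def by simp
  have Rform: "R s = y1 s * kg s + y2' s - y3 s * tg s" if s: "s\<in>I" for s
  proof -
    let ?G = "T s + (y1 s *\<^sub>R (kg s *\<^sub>R V s + kn s *\<^sub>R U s) + y1' s *\<^sub>R T s)
      + (y2 s *\<^sub>R (- kg s *\<^sub>R T s + tg s *\<^sub>R U s) + y2' s *\<^sub>R V s)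
      + (y3 s *\<^sub>R (- kn s *\<^sub>R T s - tg s *\<^sub>R V s) + y3' s *\<^sub>R U s)"
    have "((\<lambda>s. \<alpha> s + y1 s *\<^sub>R T s + y2 s *\<^sub>R V s + y3 s *\<^sub>R U s) has_vector_derivative ?G) (at s)"
      by (intro has_vector_derivative_add has_vector_derivative_scaleR dA dT dV dU dy1 dy2 dy3 s)
    then have "(\<gamma> has_vector_derivative ?G) (at s)"
      by (rule has_vector_derivative_transform_within_open[OF _ I(1) s]) (use gamma in auto)
    then have "R s *\<^sub>R V s = ?G" using dG[OF s] vector_derivative_unique_at by blast
    then have "(R s *\<^sub>R V s) \<bullet> V s = ?G \<bullet> V s" by simp
    then show ?thesis using VT[OF s] VU[OF s] VV[OF s]
      by (simp add: inner_add_left inner_diff_left algebra_simps)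
  qed
  have contR: "continuous_on I R"
  proof -
    have "continuous_on I (\<lambda>s. y1 s * kg s + y2' s - y3 s * tg s)"
      using smooth_cont[OF ysmooth(1)] smooth_cont[OF ysmooth(3)] smooth_cont[OF smooth(3)]
        smooth_cont[OF smooth(5)] smooth_deriv_cont[OF ysmooth(2)] unfolding y2'_def
      by (intro continuous_intros) auto
    then show ?thesis by (rule continuous_on_eq) (use Rform in auto)
  qed
  have ut: "vector_derivative \<gamma> (at s) /\<^sub>R norm (vector_derivative \<gamma> (at s)) = sgn (R s) *\<^sub>R V s"
    if s: "s\<in>I" for s
  proof -
    have "vector_derivative \<gamma> (at s) = R s *\<^sub>R V s" using dG[OF s] vector_derivative_at by blast
    then show ?thesis using nV[OF s] Rne[OF s] by (simp add: sgn_if)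
  qed
  have part1: "general_helix I \<gamma> \<longleftrightarrow> rel_normal_slant_helix I V"
  proof
    assume "general_helix I \<gamma>"
    then obtain d c where d: "norm d = 1" "\<forall>s\<in>I. (vector_derivative \<gamma> (at s) /\<^sub>R norm (vector_derivative \<gamma> (at s))) \<bullet> d = c"
      unfolding general_helix_def by blast
    have tv: "\<forall>s\<in>I. V s \<bullet> d = c \<or> V s \<bullet> d = -c"
    proof
      fix s assume s: "s\<in>I"
      have "(sgn (R s) *\<^sub>R V s) \<bullet> d = c" using d(2) s ut[OF s] by metis
      then have "sgn (R s) * (V s \<bullet> d) = c" by simp
      then show "V s \<bullet> d = c \<or> V s \<bullet> d = -c" using Rne[OF s] by (cases "R s > 0") (auto simp: sgn_if)
    qed
    have cont: "continuous_on I (\<lambda>s. V s \<bullet> d)" using contV by (intro continuous_intros) auto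
    obtain s0 where s0: "s0 \<in> I" using I(3) by blast
    have "\<forall>s\<in>I. V s \<bullet> d = V s0 \<bullet> d"
      using two_val_const[OF I(2) cont tv _ s0] by blast
    then show "rel_normal_slant_helix I V" unfolding rel_normal_slant_helix_def using d(1) by blast
  next
    assume "rel_normal_slant_helix I V"
    then obtain d c where d: "norm d = 1" "\<forall>s\<in>I. V s \<bullet> d = c" unfolding rel_normal_slant_helix_def by blast
    have reg: "\<forall>s\<in>I. \<gamma> differentiable (at s) \<and> vector_derivative \<gamma> (at s) \<noteq> 0"
    proof
      fix s assume s: "s\<in>I"
      have "vector_derivative \<gamma> (at s) = R s *\<^sub>R V s" using dG[OF s] vector_derivative_at by blast
      moreover have "R s *\<^sub>R V s \<noteq> 0" using Rne[OF s] nV[OF s] by auto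
      ultimately show "\<gamma> differentiable (at s) \<and> vector_derivative \<gamma> (at s) \<noteq> 0"
        using dG[OF s] differentiableI_vector by auto
    qed
    have "(\<forall>s\<in>I. R s > 0) \<or> (\<forall>s\<in>I. R s < 0)" using sign_const[OF I(2) contR] Rne by blast
    then have "\<exists>c'. \<forall>s\<in>I. (vector_derivative \<gamma> (at s) /\<^sub>R norm (vector_derivative \<gamma> (at s))) \<bullet> d = c'"
    proof
      assume "\<forall>s\<in>I. R s > 0"
      then have "\<forall>s\<in>I. (vector_derivative \<gamma> (at s) /\<^sub>R norm (vector_derivative \<gamma> (at s))) \<bullet> d = c"
        using ut d(2) by (auto simp: sgn_if)
      then show ?thesis by blast
    next
      assume "\<forall>s\<in>I. R s < 0"
      then have "\<forall>s\<in>I. (vector_derivative \<gamma> (at s) /\<^sub>R norm (vector_derivative \<gamma> (at s))) \<bullet> d = -c"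
        using ut d(2) by (auto simp: sgn_if)
      then show ?thesis by blast
    qed
    then show "general_helix I \<gamma>" unfolding general_helix_def using reg d(1) by blast
  qed
  define \<rho> where "\<rho> = (\<lambda>s. sqrt (tg s * tg s + kg s * kg s))"
  have sqpos: "tg s * tg s + kg s * kg s > 0" if s: "s\<in>I" for s
  proof -
    have "tg s \<noteq> 0 \<or> kg s \<noteq> 0" using nondeg s by auto
    then show ?thesis using sum_power2_gt_zero_iff[of "tg s" "kg s"] by (simp add: power2_eq_square)
  qed
  have rpos: "\<rho> s > 0" if s: "s\<in>I" for s using sqpos[OF s] unfolding \<rho>_def by simp
  have rsq: "\<rho> s * \<rho> s = tg s * tg s + kg s * kg s" if s: "s\<in>I" for s
    using sqpos[OF s] unfolding \<rho>_def by simp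
  define w1 where "w1 = (\<lambda>s. tg s / \<rho> s)"
  define w2 where "w2 = (\<lambda>s. kg s / \<rho> s)"
  have wsq: "w1 s * w1 s + w2 s * w2 s = 1" if s: "s\<in>I" for s
  proof -
    have "w1 s * w1 s + w2 s * w2 s = (tg s * tg s + kg s * kg s) / (\<rho> s * \<rho> s)"
      unfolding w1_def w2_def by (simp add: add_divide_distrib)
    then show ?thesis using rsq[OF s] rpos[OF s] nondeg s by auto
  qed
  have w1kg: "w1 s * kg s = w2 s * tg s" for s unfolding w1_def w2_def by simp
  have w2kg: "w2 s * kg s + w1 s * tg s = \<rho> s" if s: "s\<in>I" for s
  proof -
    have "w2 s * kg s + w1 s * tg s = (tg s * tg s + kg s * kg s) / \<rho> s"
      unfolding w1_def w2_def by (simp add: add_divide_distrib)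
    also have "\<dots> = \<rho> s" using rsq[OF s] rpos[OF s] by (metis less_irrefl nonzero_mult_div_cancel_left)
    finally show ?thesis .
  qed
  have nD: "norm (rect_darboux T U kg tg s) = \<rho> s" if s: "s\<in>I" for s
  proof -
    have "rect_darboux T U kg tg s \<bullet> rect_darboux T U kg tg s = tg s * tg s + kg s * kg s"
      unfolding rect_darboux_def using TT[OF s] UU[OF s] TU[OF s] UT[OF s]
      by (simp add: inner_add_left inner_add_right)
    then show ?thesis unfolding \<rho>_def norm_eq_sqrt_inner by simp
  qed
  define W where "W = (\<lambda>s. w1 s *\<^sub>R T s + w2 s *\<^sub>R U s)"
  have Weq: "rect_darboux T U kg tg s /\<^sub>R norm (rect_darboux T U kg tg s) = W s" if s: "s\<in>I" for s
    unfolding nD[OF s] unfolding rect_darboux_def W_def w1_def w2_def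
    by (simp add: scaleR_add_right divide_inverse_commute)
  have Wd: "W s \<bullet> d = w1 s * (T s \<bullet> d) + w2 s * (U s \<bullet> d)" for s d
    unfolding W_def by (simp add: inner_add_left)
  have Dr_iff: "Dr_slant_helix I T U kg tg \<longleftrightarrow> (\<exists>d c. norm d = 1 \<and> (\<forall>s\<in>I. W s \<bullet> d = c))"
    unfolding Dr_slant_helix_def using Weq by (metis (no_types, lifting))
  have contr: "continuous_on I \<rho>" unfolding \<rho>_def
    using smooth_cont[OF smooth(3)] smooth_cont[OF smooth(5)] by (intro continuous_intros)
  have rne: "\<forall>s\<in>I. \<rho> s \<noteq> 0" using rpos by (metis less_irrefl)
  have contw1: "continuous_on I w1" unfolding w1_def
    using smooth_cont[OF smooth(5)] contr rne by (intro continuous_intros) auto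
  have contw2: "continuous_on I w2" unfolding w2_def
    using smooth_cont[OF smooth(3)] contr rne by (intro continuous_intros) auto
  have part2: "rel_normal_slant_helix I V \<longleftrightarrow> Dr_slant_helix I T U kg tg"
  proof
    assume "rel_normal_slant_helix I V"
    then obtain d c where d: "norm d = 1" "\<forall>s\<in>I. V s \<bullet> d = c" unfolding rel_normal_slant_helix_def by blast
    have e: "- kg s * (T s \<bullet> d) + tg s * (U s \<bullet> d) = 0" if s: "s\<in>I" for s
    proof -
      have "(- kg s *\<^sub>R T s + tg s *\<^sub>R U s) \<bullet> d = 0"
        using rderiv_const_open[OF I(1) s d(2) inner_deriv[OF dV[OF s]]] .
      then show ?thesis by (simp add: inner_add_left inner_diff_left)
    qed
    have sq: "(W s \<bullet> d)\<^sup>2 = 1 - c\<^sup>2" if s: "s\<in>I" for s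
    proof -
      let ?a = "T s \<bullet> d" and ?u = "U s \<bullet> d"
      have dd: "1 = ?a\<^sup>2 + c\<^sup>2 + ?u\<^sup>2" using dec[OF s, of d] d(2) s d(1) norm_eq_1 by metis
      have q0: "w2 s * ?a - w1 s * ?u = 0"
      proof -
        have "w2 s * ?a - w1 s * ?u = (kg s * ?a - tg s * ?u) / \<rho> s"
          unfolding w1_def w2_def by (simp add: diff_divide_distrib)
        then show ?thesis using e[OF s] by simp
      qed
      have "(w1 s * ?a + w2 s * ?u)\<^sup>2 + (w2 s * ?a - w1 s * ?u)\<^sup>2
          = (w1 s * w1 s + w2 s * w2 s) * (?a\<^sup>2 + ?u\<^sup>2)"
        by (simp add: power2_eq_square algebra_simps)
      then have "(w1 s * ?a + w2 s * ?u)\<^sup>2 = ?a\<^sup>2 + ?u\<^sup>2" using q0 wsq[OF s] by simp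
      then show ?thesis using Wd dd by simp
    qed
    have tv: "\<forall>s\<in>I. W s \<bullet> d = sqrt (1 - c\<^sup>2) \<or> W s \<bullet> d = - sqrt (1 - c\<^sup>2)"
    proof
      fix s assume s: "s\<in>I"
      have "\<bar>W s \<bullet> d\<bar> = sqrt (1 - c\<^sup>2)" using sq[OF s] real_sqrt_abs[of "W s \<bullet> d"] by simp
      then show "W s \<bullet> d = sqrt (1 - c\<^sup>2) \<or> W s \<bullet> d = - sqrt (1 - c\<^sup>2)" by linarith
    qed
    have cont: "continuous_on I (\<lambda>s. W s \<bullet> d)" unfolding Wd
      using contw1 contw2 contT contU by (intro continuous_intros)
    obtain s0 where s0: "s0 \<in> I" using I(3) by blast
    have "\<forall>s\<in>I. W s \<bullet> d = W s0 \<bullet> d"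
      using two_val_const[OF I(2) cont tv _ s0] by blast
    then show "Dr_slant_helix I T U kg tg" unfolding Dr_iff using d(1) by blast
  next
    assume "Dr_slant_helix I T U kg tg"
    then obtain d c where d: "norm d = 1" "\<forall>s\<in>I. W s \<bullet> d = c" unfolding Dr_iff by blast
    have dd1: "d \<bullet> d = 1" using d(1) norm_eq_1 by blast
    define a where "a = (\<lambda>s. T s \<bullet> d)"
    define b where "b = (\<lambda>s. V s \<bullet> d)"
    define u where "u = (\<lambda>s. U s \<bullet> d)"
    define tg' where "tg' = (\<lambda>s. vector_derivative tg (at s))"
    define kg' where "kg' = (\<lambda>s. vector_derivative kg (at s))"
    have dtg: "\<And>s. s\<in>I \<Longrightarrow> (tg has_real_derivative tg' s) (at s)" using smooth_real_deriv[OF smooth(5)] tg'_def by simp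
    have dkg: "\<And>s. s\<in>I \<Longrightarrow> (kg has_real_derivative kg' s) (at s)" using smooth_real_deriv[OF smooth(3)] kg'_def by simp
    define \<theta> where "\<theta> = (\<lambda>s. (kg s * tg' s - tg s * kg' s) / (\<rho> s * \<rho> s))"
    define m where "m = (\<lambda>s. \<theta> s - kn s)"
    define q where "q = (\<lambda>s. w2 s * a s - w1 s * u s)"
    have dsq: "((\<lambda>s. tg s * tg s + kg s * kg s) has_real_derivative
        (2 * (tg s * tg' s + kg s * kg' s))) (at s)" if s: "s\<in>I" for s
      using DERIV_add[OF DERIV_mult[OF dtg[OF s] dtg[OF s]] DERIV_mult[OF dkg[OF s] dkg[OF s]]] by (simp add: algebra_simps)
    have dr: "(\<rho> has_real_derivative (tg s * tg' s + kg s * kg' s) / \<rho> s) (at s)" if s: "s\<in>I" for s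
    proof -
      have h: "((\<lambda>s. sqrt (tg s * tg s + kg s * kg s)) has_real_derivative
          inverse (sqrt (tg s * tg s + kg s * kg s)) / 2 * (2 * (tg s * tg' s + kg s * kg' s))) (at s)"
        by (rule DERIV_chain2[OF DERIV_real_sqrt[OF sqpos[OF s]] dsq[OF s]])
      show ?thesis unfolding \<rho>_def using DERIV_cong[OF h inv_half] .
    qed
    have dw1: "(w1 has_real_derivative w2 s * \<theta> s) (at s)" if s: "s\<in>I" for s
    proof -
      have "(w1 has_real_derivative (tg' s * \<rho> s - tg s * ((tg s * tg' s + kg s * kg' s) / \<rho> s)) / (\<rho> s * \<rho> s)) (at s)"
        unfolding w1_def using DERIV_divide[OF dtg[OF s] dr[OF s]] rne s by auto
      then show ?thesis
        using quot_alg[OF rpos[OF s] rsq[OF s], of "tg' s" "kg' s"] unfolding w2_def \<theta>_def by simp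
    qed
    have dw2: "(w2 has_real_derivative - (w1 s * \<theta> s)) (at s)" if s: "s\<in>I" for s
    proof -
      have rsq': "\<rho> s * \<rho> s = kg s * kg s + tg s * tg s" using rsq[OF s] by simp
      have D: "(w2 has_real_derivative (kg' s * \<rho> s - kg s * ((tg s * tg' s + kg s * kg' s) / \<rho> s)) / (\<rho> s * \<rho> s)) (at s)"
        unfolding w2_def using DERIV_divide[OF dkg[OF s] dr[OF s]] rne s by auto
      have "(kg' s * \<rho> s - kg s * ((tg s * tg' s + kg s * kg' s) / \<rho> s)) / (\<rho> s * \<rho> s)
          = (kg' s * \<rho> s - kg s * ((kg s * kg' s + tg s * tg' s) / \<rho> s)) / (\<rho> s * \<rho> s)"
        by (simp add: add.commute)
      also have "\<dots> = (tg s / \<rho> s) * ((tg s * kg' s - kg s * tg' s) / (\<rho> s * \<rho> s))"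
        using quot_alg[OF rpos[OF s] rsq', of "kg' s" "tg' s"] .
      also have "\<dots> = - (w1 s * \<theta> s)" unfolding w1_def \<theta>_def by (rule neg_lemma)
      finally show ?thesis using DERIV_cong[OF D] by blast
    qed
    have da: "(a has_real_derivative kg s * b s + kn s * u s) (at s)" if s: "s\<in>I" for s
      unfolding a_def b_def u_def by (rule DERIV_cong[OF inner_deriv[OF dT[OF s]]]) (simp add: inner_add_left)
    have db: "(b has_real_derivative - kg s * a s + tg s * u s) (at s)" if s: "s\<in>I" for s
      unfolding a_def b_def u_def by (rule DERIV_cong[OF inner_deriv[OF dV[OF s]]]) (simp add: inner_add_left inner_diff_left)
    have du: "(u has_real_derivative - kn s * a s - tg s * b s) (at s)" if s: "s\<in>I" for s
      unfolding a_def b_def u_def by (rule DERIV_cong[OF inner_deriv[OF dU[OF s]]]) (simp add: inner_add_left inner_diff_left)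
    have fc: "\<forall>s\<in>I. w1 s * a s + w2 s * u s = c" using d(2) Wd unfolding a_def u_def by simp
    have mq0: "m s * q s = 0" if s: "s\<in>I" for s
    proof -
      have "((\<lambda>s. w1 s * a s + w2 s * u s) has_real_derivative
          (w2 s * \<theta> s) * a s + (kg s * b s + kn s * u s) * w1 s
          + ((- (w1 s * \<theta> s)) * u s + (- kn s * a s - tg s * b s) * w2 s)) (at s)"
        by (rule DERIV_add[OF DERIV_mult[OF dw1[OF s] da[OF s]] DERIV_mult[OF dw2[OF s] du[OF s]]])
      then have E: "(w2 s * \<theta> s) * a s + (kg s * b s + kn s * u s) * w1 s
          + ((- (w1 s * \<theta> s)) * u s + (- kn s * a s - tg s * b s) * w2 s) = 0"
        using rderiv_const_open[OF I(1) s fc] by blast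
      have "(w2 s * \<theta> s) * a s + (kg s * b s + kn s * u s) * w1 s
          + ((- (w1 s * \<theta> s)) * u s + (- kn s * a s - tg s * b s) * w2 s)
          = m s * q s + b s * (w1 s * kg s - w2 s * tg s)"
        unfolding m_def q_def by (simp add: algebra_simps)
      then show ?thesis using E w1kg[of s] by simp
    qed
    have ident: "c\<^sup>2 + (q s)\<^sup>2 + (b s)\<^sup>2 = 1" if s: "s\<in>I" for s
    proof -
      have dd: "1 = (a s)\<^sup>2 + (b s)\<^sup>2 + (u s)\<^sup>2" using dec[OF s, of d] dd1 unfolding a_def b_def u_def by simp
      have "(w1 s * a s + w2 s * u s)\<^sup>2 + (w2 s * a s - w1 s * u s)\<^sup>2
          = (w1 s * w1 s + w2 s * w2 s) * ((a s)\<^sup>2 + (u s)\<^sup>2)"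
        by (simp add: power2_eq_square algebra_simps)
      then have "c\<^sup>2 + (q s)\<^sup>2 = (a s)\<^sup>2 + (u s)\<^sup>2" using fc s wsq[OF s] unfolding q_def by simp
      then show ?thesis using dd by simp
    qed
    have dq: "(q has_real_derivative - m s * c + \<rho> s * b s) (at s)" if s: "s\<in>I" for s
    proof -
      have "(q has_real_derivative
          ((- (w1 s * \<theta> s)) * a s + (kg s * b s + kn s * u s) * w2 s)
          - ((w2 s * \<theta> s) * u s + (- kn s * a s - tg s * b s) * w1 s)) (at s)"
        unfolding q_def
        by (rule DERIV_diff[OF DERIV_mult[OF dw2[OF s] da[OF s]] DERIV_mult[OF dw1[OF s] du[OF s]]])
      moreover have "((- (w1 s * \<theta> s)) * a s + (kg s * b s + kn s * u s) * w2 s)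
          - ((w2 s * \<theta> s) * u s + (- kn s * a s - tg s * b s) * w1 s)
          = - m s * (w1 s * a s + w2 s * u s) + b s * (w2 s * kg s + w1 s * tg s)"
        unfolding m_def by (simp add: algebra_simps)
      ultimately show ?thesis using fc s w2kg[OF s] by (simp add: mult.commute)
    qed
    have dbq: "(b has_real_derivative - \<rho> s * q s) (at s)" if s: "s\<in>I" for s
    proof -
      have "- kg s * a s + tg s * u s = - \<rho> s * q s"
        unfolding q_def w1_def w2_def using rne s by (simp add: algebra_simps)
      then show ?thesis using db[OF s] by simp
    qed
    have contb: "continuous_on I b" unfolding b_def using contV by (intro continuous_intros)
    have conta: "continuous_on I a" unfolding a_def using contT by (intro continuous_intros)
    have contu: "continuous_on I u" unfolding u_def using contU by (intro continuous_intros)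
    have contq: "continuous_on I q" unfolding q_def using contw1 contw2 conta contu by (intro continuous_intros)
    have contm: "continuous_on I m" unfolding m_def \<theta>_def tg'_def kg'_def
      using smooth_cont[OF smooth(3)] smooth_cont[OF smooth(4)] smooth_cont[OF smooth(5)]
        smooth_deriv_cont[OF smooth(3)] smooth_deriv_cont[OF smooth(5)] contr rne
      by (intro continuous_intros) auto
    obtain s0 where s0: "s0 \<in> I" using I(3) by blast
    show "rel_normal_slant_helix I V"
    proof (cases "c\<^sup>2 = 1")
      case True
      then have "\<forall>s\<in>I. V s \<bullet> d = 0" using ident unfolding b_def by (simp add: sum_power2_eq_zero_iff)
      then show ?thesis unfolding rel_normal_slant_helix_def using d(1) by blast
    next
      case False
      define Z where "Z = {s\<in>I. m s = 0}"
      define A where "A = I - Z"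
      define B where "B = {s\<in>I. (q s)\<^sup>2 + (m s * c - \<rho> s * b s)\<^sup>2 = 0}"
      have Zc: "closedin (top_of_set I) Z" unfolding Z_def by (rule continuous_closedin_preimage_constant[OF contm])
      have Ao: "openin (top_of_set I) A" unfolding A_def using Zc by (intro openin_diff) auto
      have Aopen: "open A" using openin_open_trans[OF Ao I(1)] .
      have Bc: "closedin (top_of_set I) B" unfolding B_def
        using contq contm contr contb by (intro continuous_closedin_preimage_constant continuous_intros)
      have AB: "A = B"
      proof
        show "A \<subseteq> B"
        proof
          fix s assume sA: "s\<in>A"
          then have s: "s\<in>I" and ms: "m s \<noteq> 0" unfolding A_def Z_def by auto
          have qA: "\<forall>t\<in>A. q t = 0"
          proof
            fix t assume "t\<in>A"
            then have "t\<in>I" "m t \<noteq> 0" unfolding A_def Z_def by auto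
            then show "q t = 0" using mq0 by auto
          qed
          have "- m s * c + \<rho> s * b s = 0" using rderiv_const_open[OF Aopen sA qA dq[OF s]] .
          then show "s\<in>B" unfolding B_def using qA sA s by (simp add: algebra_simps)
        qed
      next
        show "B \<subseteq> A"
        proof
          fix s assume sB: "s\<in>B"
          then have s: "s\<in>I" and qs: "q s = 0" and mc: "m s * c = \<rho> s * b s"
            unfolding B_def by (auto simp: sum_power2_eq_zero_iff)
          show "s\<in>A"
          proof (rule ccontr)
            assume "s\<notin>A"
            then have "m s = 0" using s unfolding A_def Z_def by auto
            then have "\<rho> s * b s = 0" using mc by simp
            then have "b s = 0" using rne s by simp
            then show False using ident[OF s] qs False by simp
          qed
        qed
      qed
      have "connected I" using I(2) is_interval_connected by blast
      then have "A = {} \<or> A = I" using Ao Bc AB unfolding connected_clopen by blast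
      then show ?thesis
      proof
        assume "A = I"
        then have q0: "\<forall>s\<in>I. q s = 0" using mq0 unfolding A_def Z_def by auto
        have "\<exists>c0. \<forall>s\<in>I. b s = c0"
        proof (rule has_field_derivative_zero_constant)
          show "convex I" using I(2) is_interval_convex by blast
          fix s assume s: "s\<in>I"
          then show "(b has_field_derivative 0) (at s within I)"
            using dbq[OF s] q0 by (auto intro: has_field_derivative_at_within)
        qed
        then show ?thesis unfolding rel_normal_slant_helix_def b_def using d(1) by blast
      next
        assume "A = {}"
        then have m0: "\<forall>s\<in>I. m s = 0" unfolding A_def Z_def by auto
        have dW0: "(W has_vector_derivative 0) (at s within I)" if s: "s\<in>I" for s
        proof -
          have "(W has_vector_derivative
             (w1 s *\<^sub>R (kg s *\<^sub>R V s + kn s *\<^sub>R U s) + (w2 s * \<theta> s) *\<^sub>R T s)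
           + (w2 s *\<^sub>R (- kn s *\<^sub>R T s - tg s *\<^sub>R V s) + (- (w1 s * \<theta> s)) *\<^sub>R U s)) (at s)"
            unfolding W_def
            by (intro has_vector_derivative_add has_vector_derivative_scaleR dT dU dw1 dw2 s)
          moreover have "\<theta> s = kn s" using m0 s unfolding m_def by auto
          moreover have "(w1 s *\<^sub>R (kg s *\<^sub>R V s + kn s *\<^sub>R U s) + (w2 s * kn s) *\<^sub>R T s)
           + (w2 s *\<^sub>R (- kn s *\<^sub>R T s - tg s *\<^sub>R V s) + (- (w1 s * kn s)) *\<^sub>R U s)
           = (w1 s * kg s - w2 s * tg s) *\<^sub>R V s"
            by (simp add: algebra_simps)
          ultimately have "(W has_vector_derivative 0) (at s)" using w1kg[of s] by simp
          then show ?thesis by (rule has_vector_derivative_at_within)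
        qed
        obtain e where e: "\<And>s. s\<in>I \<Longrightarrow> W s = e"
          using has_vector_derivative_zero_constant[of I W] dW0 I(2) is_interval_convex by blast
        have ne: "norm e = 1"
        proof -
          have "W s0 \<bullet> W s0 = w1 s0 * w1 s0 + w2 s0 * w2 s0"
            unfolding W_def using TT[OF s0] UU[OF s0] TU[OF s0] UT[OF s0]
            by (simp add: inner_add_left inner_add_right)
          then show ?thesis using wsq[OF s0] e[OF s0] norm_eq_1 by metis
        qed
        have "\<forall>s\<in>I. V s \<bullet> e = 0"
        proof
          fix s assume s: "s\<in>I"
          show "V s \<bullet> e = 0" unfolding e[OF s, symmetric] W_def
            using VT[OF s] VU[OF s] by (simp add: inner_add_right)
        qed
        then show ?thesis unfolding rel_normal_slant_helix_def using ne by blast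
      qed
    qed
  qed
  show ?thesis using part1 part2 by blast
qed
end
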